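(* Let $\mathcal{H}$ be a finite family of digraphs containing a directed path $P$ of length $p$. Let $D$ be a digraph containing no subgraph isomorphic to a graph in $\mathcal{H}^-_p$, and let $k$ be an integer. Then $(D,k)$ is a yes-instance of $\mathcal{H}$-SCC Deletion if and only if it is a yes-instance of $\{P\}$-SCC Deletion.
   Context: Subgraphs are not necessarily induced; strong components are maximal sets of mutually reachable vertices. For a family $\mathcal{F}$, $\mathcal{F}$-SCC Deletion asks, given $(D,k)$, whether some $X\subseteq V(D)$ with $|X|\le k$ is such that no strong component of $D-X$ contains a subgraph isomorphic to a graph in $\mathcal{F}$. For a digraph $H$, $GPC(H)$ is the set of strongly connected digraphs $H\cup P_1\cup\dots\cup P_\ell$ (union of vertex and arc sets) where each $P_i$ is a directed path with both end-points in $V(H)$ and the ordered end-point pairs of the $P_i$ are pairwise distinct; $\{P_1,\dots,P_\ell\}$ is a witnessing collection of paths. $GPC(\mathcal{H})=\bigcup_{H\in\mathcal{H}}GPC(H)$. $\mathcal{H}^-_p$ is the set of digraphs in $GPC(\mathcal{H})$ admitting a witnessing collection of paths all of length at most $p-1$. *)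

theory Defs
  imports Main
begin

type_synonym 'a digraph = "'a set \<times> ('a \<times> 'a) set"

definition verts :: "'a digraph \<Rightarrow> 'a set" where "verts G = fst G"
definition arcs :: "'a digraph \<Rightarrow> ('a \<times> 'a) set" where "arcs G = snd G"

definition wf_digraph :: "'a digraph \<Rightarrow> bool" where
  "wf_digraph G \<longleftrightarrow> finite (verts G) \<and> arcs G \<subseteq> verts G \<times> verts G
     \<and> (\<forall>v. (v, v) \<notin> arcs G)"

definition contains_copy :: "'a digraph \<Rightarrow> 'b digraph \<Rightarrow> bool" where
  "contains_copy G H \<longleftrightarrow> (\<exists>f. inj_on f (verts H) \<and> f ` verts H \<subseteq> verts G
      \<and> (\<forall>(u, v) \<in> arcs H. (f u, f v) \<in> arcs G))"

definition strongly_connected :: "'a digraph \<Rightarrow> bool" where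
  "strongly_connected G \<longleftrightarrow>
     (\<forall>u \<in> verts G. \<forall>v \<in> verts G. (u, v) \<in> (arcs G)\<^sup>*)"

definition del_verts :: "'a digraph \<Rightarrow> 'a set \<Rightarrow> 'a digraph" where
  "del_verts G X = (verts G - X, {(u, v) \<in> arcs G. u \<notin> X \<and> v \<notin> X})"

definition induce :: "'a digraph \<Rightarrow> 'a set \<Rightarrow> 'a digraph" where
  "induce G C = (C, {(u, v) \<in> arcs G. u \<in> C \<and> v \<in> C})"

definition strong_components :: "'a digraph \<Rightarrow> 'a set set" where
  "strong_components G = {C. \<exists>v \<in> verts G.
      C = {u \<in> verts G. (v, u) \<in> (arcs G)\<^sup>* \<and> (u, v) \<in> (arcs G)\<^sup>*}}"

definition scc_deletion_yes :: "'b digraph set \<Rightarrow> 'a digraph \<Rightarrow> int \<Rightarrow> bool" where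
  "scc_deletion_yes F D k \<longleftrightarrow> (\<exists>X \<subseteq> verts D. int (card X) \<le> k \<and>
     (\<forall>C \<in> strong_components (del_verts D X). \<forall>H \<in> F.
        \<not> contains_copy (induce (del_verts D X) C) H))"

text \<open>Directed path with vertex sequence xs (distinct); its length is length xs - 1.\<close>
definition path_arcs :: "'a list \<Rightarrow> ('a \<times> 'a) set" where
  "path_arcs xs = set (zip xs (tl xs))"

definition is_dipath :: "'a list \<Rightarrow> bool" where
  "is_dipath xs \<longleftrightarrow> xs \<noteq> [] \<and> distinct xs"

definition is_path_digraph :: "'a digraph \<Rightarrow> nat \<Rightarrow> bool" where
  "is_path_digraph G p \<longleftrightarrow> (\<exists>xs. is_dipath xs \<and> length xs = Suc p
      \<and> verts G = set xs \<and> arcs G = path_arcs xs)"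

text \<open>Such a subgraph is
  realised directly inside D's vertex type: an injective copy f(H) of some H in \<H>
  together with a witnessing collection of directed paths Ps (length at most p-1,
  end-points in f(V(H)), pairwise distinct ordered end-point pairs) whose union with
  f(H) is strongly connected and is a subgraph of D.\<close>
definition contains_Hminus :: "'a digraph \<Rightarrow> 'b digraph set \<Rightarrow> nat \<Rightarrow> bool" where
  "contains_Hminus D \<H> p \<longleftrightarrow> (\<exists>H \<in> \<H>. \<exists>(f :: 'b \<Rightarrow> 'a) (Ps :: 'a list list).
      inj_on f (verts H)
    \<and> (\<forall>xs \<in> set Ps. is_dipath xs \<and> length xs - 1 \<le> p - 1 \<and> length xs \<le> p
            \<and> hd xs \<in> f ` verts H \<and> last xs \<in> f ` verts H)
    \<and> distinct (map (\<lambda>xs. (hd xs, last xs)) Ps)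
    \<and> (let G = (f ` verts H \<union> (\<Union>xs \<in> set Ps. set xs),
                 (\<lambda>(u, v). (f u, f v)) ` arcs H \<union> (\<Union>xs \<in> set Ps. path_arcs xs))
       in strongly_connected G \<and> verts G \<subseteq> verts D \<and> arcs G \<subseteq> arcs D))"

end

theory Submission imports Defs begin

lemma pa_nil[simp]: "path_arcs [] = {}" by (simp add: path_arcs_def)
lemma pa_single[simp]: "path_arcs [a] = {}" by (simp add: path_arcs_def)
lemma pa_cons2[simp]: "path_arcs (a # b # t) = insert (a,b) (path_arcs (b#t))"
  by (simp add: path_arcs_def)

lemma pa_cons: "xs \<noteq> [] \<Longrightarrow> path_arcs (a # xs) = insert (a, hd xs) (path_arcs xs)"
  by (cases xs) auto

lemma pa_snoc: "xs \<noteq> [] \<Longrightarrow> path_arcs (xs @ [z]) = insert (last xs, z) (path_arcs xs)"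
proof (induction xs arbitrary: w)
  case Nil then show ?case by simp
next
  case (Cons a xs)
  then show ?case by (cases xs) (auto simp: pa_cons)
qed

lemma pa_append: "path_arcs xs \<subseteq> path_arcs (xs @ ys)"
proof (induction xs arbitrary: w)
  case Nil then show ?case by simp
next
  case (Cons a xs)
  then show ?case
    by (cases xs; cases ys) (auto simp: pa_cons)
qed

lemma pa_take: "path_arcs (take n xs) \<subseteq> path_arcs xs"
  using pa_append[of "take n xs" "drop n xs"] by simp

lemma pa_sub: "path_arcs xs \<subseteq> set xs \<times> set xs"
proof (induction xs arbitrary: w)
  case Nil then show ?case by simp
next
  case (Cons a xs)
  then show ?case by (cases xs) (auto simp: pa_cons)
qed

lemma pa_reach:
  assumes "xs \<noteq> []" "w \<in> set xs"
  shows "(hd xs, w) \<in> (path_arcs xs)\<^sup>* \<and> (w, last xs) \<in> (path_arcs xs)\<^sup>*"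
  using assms
proof (induction xs arbitrary: w)
  case Nil then show ?case by simp
next
  case (Cons a xs)
  show ?case
  proof (cases "xs = []")
    case True then show ?thesis using Cons by simp
  next
    case False
    have sub: "(path_arcs xs)\<^sup>* \<subseteq> (path_arcs (a#xs))\<^sup>*"
      using False by (intro rtrancl_mono) (auto simp: pa_cons)
    have e: "(a, hd xs) \<in> (path_arcs (a#xs))\<^sup>*" using False by (auto simp: pa_cons)
    have l: "(hd xs, last xs) \<in> (path_arcs xs)\<^sup>*" using Cons.IH[OF False last_in_set[OF False]] by auto
    show ?thesis
    proof (cases "w = a")
      case True
      then show ?thesis using e l sub False
        by (auto intro: rtrancl_trans)
    next
      case fw: False
      then have w: "w \<in> set xs" using Cons by simp
      from Cons.IH[OF False w] have "(hd xs, w) \<in> (path_arcs xs)\<^sup>*" "(w, last xs) \<in> (path_arcs xs)\<^sup>*" by auto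
      then show ?thesis using e sub False by (auto intro: rtrancl_trans)
    qed
  qed
qed

lemma path_exists:
  assumes "(u, v) \<in> R\<^sup>*"
  shows "\<exists>xs. xs \<noteq> [] \<and> distinct xs \<and> hd xs = u \<and> last xs = v \<and> path_arcs xs \<subseteq> R
     \<and> (\<forall>w \<in> set xs. (u, w) \<in> R\<^sup>* \<and> (w, v) \<in> R\<^sup>*)"
  using assms
proof (induction rule: rtrancl_induct)
  case base
  then show ?case by (intro exI[of _ "[u]"]) auto
next
  case (step y z)
  then obtain xs where xs: "xs \<noteq> []" "distinct xs" "hd xs = u" "last xs = y" "path_arcs xs \<subseteq> R"
    "\<forall>w \<in> set xs. (u, w) \<in> R\<^sup>* \<and> (w, y) \<in> R\<^sup>*" by blast
  show ?case
  proof (cases "z \<in> set xs")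
    case True
    then obtain ys zs where s: "xs = ys @ z # zs" by (meson split_list)
    have "path_arcs (ys @ [z]) \<subseteq> path_arcs xs"
      using pa_append[of "ys @ [z]" zs] s by simp
    moreover have "hd (ys @ [z]) = u" using xs(3) s by (cases ys) auto
    moreover have "distinct (ys @ [z])" using xs(2) s by auto
    moreover have "\<forall>w \<in> set (ys @ [z]). (u, w) \<in> R\<^sup>* \<and> (w, z) \<in> R\<^sup>*"
      using xs(6) s step(2) by (auto intro: rtrancl_into_rtrancl)
    ultimately show ?thesis using xs(5) by (intro exI[of _ "ys @ [z]"]) auto
  next
    case False
    have "path_arcs (xs @ [z]) \<subseteq> R" using pa_snoc[OF xs(1)] xs step(2) by auto
    moreover have "hd (xs @ [z]) = u" using xs by simp
    moreover have "\<forall>w \<in> set (xs @ [z]). (u, w) \<in> R\<^sup>* \<and> (w, z) \<in> R\<^sup>*"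
      using xs(6) step by (auto intro: rtrancl_into_rtrancl)
    ultimately show ?thesis using xs False by (intro exI[of _ "xs @ [z]"]) auto
  qed
qed


lemma copyP:
  assumes "is_path_digraph P p" "distinct xs" "length xs \<ge> Suc p" "set xs \<subseteq> V'"
    "path_arcs xs \<subseteq> A'"
  shows "contains_copy ((V', A') :: 'a digraph) (P :: 'b digraph)"
proof -
  obtain ys where ys: "distinct ys" "length ys = Suc p" "verts P = set ys" "arcs P = path_arcs ys"
    using assms(1) unfolding is_path_digraph_def is_dipath_def by blast
  define g where "g = inv_into {..<Suc p} (\<lambda>i. ys ! i)"
  define f where "f = (\<lambda>a. xs ! g a)"
  have inj: "inj_on (\<lambda>i. ys ! i) {..<Suc p}"
    using ys(1,2) by (simp add: inj_on_def nth_eq_iff_index_eq)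
  have fy: "f (ys ! i) = xs ! i" if "i < Suc p" for i
    using inv_into_f_f[OF inj, of i] that unfolding f_def g_def by simp
  have setys: "set ys = (\<lambda>i. ys ! i) ` {..<Suc p}"
    using ys(2) by (auto simp: in_set_conv_nth)
  have "inj_on f (verts P)"
  proof (rule inj_onI)
    fix a b assume "a \<in> verts P" "b \<in> verts P" "f a = f b"
    then obtain i j where "i < Suc p" "j < Suc p" "a = ys ! i" "b = ys ! j"
      using ys(3) setys by auto
    then show "a = b" using \<open>f a = f b\<close> fy assms(2,3) by (simp add: nth_eq_iff_index_eq)
  qed
  moreover have "f ` verts P \<subseteq> V'"
  proof
    fix y assume "y \<in> f ` verts P"
    then obtain i where "i < Suc p" "y = f (ys ! i)" using ys(3) setys by auto
    then show "y \<in> V'" using fy assms(3,4) proof -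
      have "i < length xs" using \<open>i < Suc p\<close> assms(3) by linarith
      then show ?thesis using fy[OF \<open>i < Suc p\<close>] \<open>y = f (ys ! i)\<close> assms(4) nth_mem by auto
    qed
  qed
  moreover have "\<forall>(u, v) \<in> arcs P. (f u, f v) \<in> A'"
  proof (clarify)
    fix u v assume "(u, v) \<in> arcs P"
    then obtain n where n: "ys ! n = u" "ys ! Suc n = v" "Suc n < Suc p"
      using ys(2,4) unfolding path_arcs_def by (auto simp: in_set_zip nth_tl)
    then have "(f u, f v) = (xs ! n, tl xs ! n)" using fy n assms(3) by (auto simp: nth_tl)
    also have "\<dots> \<in> path_arcs xs" unfolding path_arcs_def using n assms(3)
      by (auto simp: in_set_zip)
    finally show "(f u, f v) \<in> A'" using assms(5) by auto
  qed
  ultimately show ?thesis unfolding contains_copy_def verts_def arcs_def by auto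
qed


theorem lemma26:
  fixes \<H> :: "'b digraph set" and P :: "'b digraph" and D :: "'a digraph"
    and p :: nat and k :: int
  assumes "finite \<H>" and "\<forall>H \<in> \<H>. wf_digraph H"
    and "P \<in> \<H>" and "is_path_digraph P p"
    and "wf_digraph D"
    and "\<not> contains_Hminus D \<H> p"
  shows "scc_deletion_yes \<H> D k \<longleftrightarrow> scc_deletion_yes {P} D k"
proof
  assume "scc_deletion_yes \<H> D k"
  then show "scc_deletion_yes {P} D k" using assms(3) unfolding scc_deletion_yes_def by blast
next
  assume "scc_deletion_yes {P} D k"
  then obtain X where X: "X \<subseteq> verts D" "int (card X) \<le> k"
    "\<forall>C \<in> strong_components (del_verts D X). \<not> contains_copy (induce (del_verts D X) C) P"
    unfolding scc_deletion_yes_def by blast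
  define G' where "G' = del_verts D X"
  define R where "R = arcs G'"
  define V' where "V' = verts G'"
  have RV: "R \<subseteq> V' \<times> V'" using assms(5) unfolding R_def V'_def G'_def del_verts_def
      wf_digraph_def verts_def arcs_def by auto
  have V'D: "V' \<subseteq> verts D" unfolding V'_def G'_def del_verts_def verts_def by auto
  have RD: "R \<subseteq> arcs D" unfolding R_def G'_def del_verts_def arcs_def by auto
  have "\<not> contains_copy (induce G' C) H" if C: "C \<in> strong_components G'" and H: "H \<in> \<H>" for C H
  proof
    assume cc: "contains_copy (induce G' C) H"
    from C obtain c where c: "c \<in> V'" "C = {u \<in> V'. (c, u) \<in> R\<^sup>* \<and> (u, c) \<in> R\<^sup>*}"
      unfolding strong_components_def R_def V'_def by blast
    have noP: "\<not> contains_copy (induce G' C) P" using X(3) C G'_def by blast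
    have indarcs: "arcs (induce G' C) = {(u, v) \<in> R. u \<in> C \<and> v \<in> C}"
      unfolding induce_def arcs_def R_def by simp
    have indverts: "verts (induce G' C) = C" unfolding induce_def verts_def by simp
    have CV: "C \<subseteq> V'" using c by auto
    have pathC: "\<exists>xs. xs \<noteq> [] \<and> distinct xs \<and> hd xs = u \<and> last xs = v \<and> set xs \<subseteq> C
        \<and> path_arcs xs \<subseteq> arcs (induce G' C) \<and> length xs \<le> p"
      if uv: "u \<in> C" "v \<in> C" for u v
    proof -
      have "(u, v) \<in> R\<^sup>*" using uv c by (auto intro: rtrancl_trans)
      from path_exists[OF this] obtain xs where xs: "xs \<noteq> []" "distinct xs" "hd xs = u"
        "last xs = v" "path_arcs xs \<subseteq> R" "\<forall>w \<in> set xs. (u, w) \<in> R\<^sup>* \<and> (w, v) \<in> R\<^sup>*"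
        by blast
      have sC: "set xs \<subseteq> C"
      proof
        fix w assume w: "w \<in> set xs"
        have "w \<in> V'"
        proof (cases "w = u")
          case True then show ?thesis using uv CV by auto
        next
          case False
          have "(u, w) \<in> R\<^sup>*" using xs(6) w by blast
          then obtain w' where "(w', w) \<in> R" using False by (cases rule: rtranclE) auto
          then show ?thesis using RV by auto
        qed
        then show "w \<in> C" using xs(6) w uv c by (auto intro: rtrancl_trans)
      qed
      have pa: "path_arcs xs \<subseteq> arcs (induce G' C)"
        using xs(5) pa_sub[of xs] sC indarcs by auto
      have "length xs \<le> p"
      proof (rule ccontr)
        assume "\<not> length xs \<le> p"
        then have "length (take (Suc p) xs) \<ge> Suc p" by simp
        moreover have "distinct (take (Suc p) xs)" using xs(2) by simp
        moreover have "set (take (Suc p) xs) \<subseteq> C" using sC set_take_subset by fast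
        moreover have "path_arcs (take (Suc p) xs) \<subseteq> arcs (induce G' C)"
          using pa pa_take by fast
        ultimately have "contains_copy (C, arcs (induce G' C)) P"
          using copyP[OF assms(4)] by blast
        moreover have "induce G' C = (C, arcs (induce G' C))"
          unfolding induce_def arcs_def by simp
        ultimately show False using noP by simp
      qed
      then show ?thesis using xs sC pa by blast
    qed
    from cc obtain f where f: "inj_on f (verts H)" "f ` verts H \<subseteq> C"
      "\<forall>(u, v) \<in> arcs H. (f u, f v) \<in> arcs (induce G' C)"
      unfolding contains_copy_def indverts by blast
    define fV where "fV = f ` verts H"
    have finH: "finite (verts H)" using assms(2) H unfolding wf_digraph_def by blast
    define S where "S = {(a, b). a \<in> fV \<and> b \<in> fV \<and> a \<noteq> b}"
    have finS: "finite S"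
    proof (rule finite_subset)
      show "S \<subseteq> fV \<times> fV" unfolding S_def by auto
      show "finite (fV \<times> fV)" using finH unfolding fV_def by simp
    qed
    define Q where "Q = (\<lambda>a b xs. xs \<noteq> [] \<and> distinct xs \<and> hd xs = a \<and> last xs = b
        \<and> set xs \<subseteq> C \<and> path_arcs xs \<subseteq> arcs (induce G' C) \<and> length xs \<le> p)"
    have "\<forall>ab \<in> S. \<exists>xs. Q (fst ab) (snd ab) xs"
    proof
      fix ab assume "ab \<in> S"
      then have "fst ab \<in> C" "snd ab \<in> C" using f(2) unfolding S_def fV_def by auto
      from pathC[OF this] show "\<exists>xs. Q (fst ab) (snd ab) xs" unfolding Q_def by blast
    qed
    from bchoice[OF this] obtain g where g0: "\<forall>ab \<in> S. Q (fst ab) (snd ab) (g ab)" by blast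
    have g: "g ab \<noteq> [] \<and> distinct (g ab) \<and> hd (g ab) = fst ab \<and> last (g ab) = snd ab
        \<and> set (g ab) \<subseteq> C \<and> path_arcs (g ab) \<subseteq> arcs (induce G' C) \<and> length (g ab) \<le> p"
      if "ab \<in> S" for ab
      using g0 that unfolding Q_def by blast
    obtain l where l: "set l = S" "distinct l" using finite_distinct_list[OF finS] by blast
    define Ps where "Ps = map g l"
    have inPs: "\<exists>ab \<in> S. xs = g ab" if "xs \<in> set Ps" for xs
      using that l(1) unfolding Ps_def by auto
    have Sf: "fst ab \<in> fV \<and> snd ab \<in> fV" if "ab \<in> S" for ab
      using that unfolding S_def by auto
    define VG where "VG = fV \<union> (\<Union>xs \<in> set Ps. set xs)"
    define AG where "AG = (\<lambda>(u, v). (f u, f v)) ` arcs H \<union> (\<Union>xs \<in> set Ps. path_arcs xs)"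
    have indD: "arcs (induce G' C) \<subseteq> arcs D" using indarcs RD by auto
    have Psp: "is_dipath xs \<and> length xs - 1 \<le> p - 1 \<and> length xs \<le> p
            \<and> hd xs \<in> f ` verts H \<and> last xs \<in> f ` verts H
            \<and> set xs \<subseteq> C \<and> path_arcs xs \<subseteq> arcs (induce G' C)" if xsP: "xs \<in> set Ps" for xs
    proof -
      obtain ab where ab: "ab \<in> S" "xs = g ab" using inPs[OF xsP] by blast
      show ?thesis using g[OF ab(1)] Sf[OF ab(1)] ab(2) unfolding is_dipath_def fV_def by auto
    qed
    have dist: "distinct (map (\<lambda>xs. (hd xs, last xs)) Ps)"
    proof -
      have "map (\<lambda>xs. (hd xs, last xs)) Ps = map id l"
        unfolding Ps_def map_map
      proof (rule map_cong[OF refl])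
        fix ab assume "ab \<in> set l"
        then have "ab \<in> S" using l(1) by simp
        then show "((\<lambda>xs. (hd xs, last xs)) \<circ> g) ab = id ab" using g[of ab] by (cases ab) auto
      qed
      then show ?thesis using l(2) by simp
    qed
    have onpath: "(hd xs, w) \<in> AG\<^sup>* \<and> (w, last xs) \<in> AG\<^sup>*" if "xs \<in> set Ps" "w \<in> set xs" for xs w
    proof -
      have "xs \<noteq> []" using that(2) by auto
      moreover have "(path_arcs xs)\<^sup>* \<subseteq> AG\<^sup>*" using that unfolding AG_def by (intro rtrancl_mono) auto
      ultimately show ?thesis using pa_reach[of xs w] that by blast
    qed
    have fVreach: "(a, b) \<in> AG\<^sup>*" if "a \<in> fV" "b \<in> fV" for a b
    proof (cases "a = b")
      case True then show ?thesis by simp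
    next
      case False
      then have ab: "(a, b) \<in> S" using that S_def by auto
      then have gin: "g (a, b) \<in> set Ps" unfolding Ps_def using l by auto
      have "g (a, b) \<noteq> []" using g[OF ab] by simp
      then have "last (g (a, b)) \<in> set (g (a, b))" by simp
      from onpath[OF gin this] show ?thesis using g[OF ab] by simp
    qed
    have anyv: "\<exists>a \<in> fV. \<exists>b \<in> fV. (a, x) \<in> AG\<^sup>* \<and> (x, b) \<in> AG\<^sup>*" if xV: "x \<in> VG" for x
    proof (cases "x \<in> fV")
      case True then show ?thesis by blast
    next
      case False
      then obtain xs where xs: "xs \<in> set Ps" "x \<in> set xs" using xV False VG_def by auto
      have "hd xs \<in> fV" "last xs \<in> fV" using Psp[OF xs(1)] unfolding fV_def by auto
      then show ?thesis using onpath[OF xs] by blast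
    qed
    have sc: "strongly_connected (VG, AG)"
      unfolding strongly_connected_def verts_def arcs_def
    proof (simp, intro ballI)
      fix x y assume "x \<in> VG" "y \<in> VG"
      obtain b where b: "b \<in> fV" "(x, b) \<in> AG\<^sup>*" using anyv[OF \<open>x \<in> VG\<close>] by blast
      obtain a where a: "a \<in> fV" "(a, y) \<in> AG\<^sup>*" using anyv[OF \<open>y \<in> VG\<close>] by blast
      have "(b, a) \<in> AG\<^sup>*" using fVreach[OF b(1) a(1)] .
      then show "(x, y) \<in> AG\<^sup>*" using a(2) b(2) by (meson rtrancl_trans)
    qed
    have vD: "VG \<subseteq> verts D"
    proof -
      have "fV \<subseteq> verts D" using f(2) CV V'D unfolding fV_def by blast
      moreover have "set xs \<subseteq> verts D" if "xs \<in> set Ps" for xs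
        using Psp[OF that] CV V'D by blast
      ultimately show ?thesis unfolding VG_def by blast
    qed
    have aD: "AG \<subseteq> arcs D"
    proof -
      have "(\<lambda>(u, v). (f u, f v)) ` arcs H \<subseteq> arcs D" using f(3) indD by auto
      moreover have "path_arcs xs \<subseteq> arcs D" if "xs \<in> set Ps" for xs
        using Psp[OF that] indD by blast
      ultimately show ?thesis unfolding AG_def by blast
    qed
    have "contains_Hminus D \<H> p"
      unfolding contains_Hminus_def Let_def
      apply (rule bexI[OF _ H])
      apply (rule exI[of _ f], rule exI[of _ Ps])
      apply (intro conjI)
      subgoal using f(1) .
      subgoal using Psp by blast
      subgoal using dist .
      subgoal using sc unfolding VG_def AG_def fV_def by simp
      subgoal using vD unfolding VG_def fV_def by (simp add: verts_def)
      subgoal using aD unfolding AG_def by (simp add: arcs_def)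
      done
    then show False using assms(6) by simp
  qed
  then show "scc_deletion_yes \<H> D k"
    unfolding scc_deletion_yes_def G'_def using X(1,2) by blast
qed

end
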